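(* Let $H$ be a complex infinite-dimensional separable Hilbert space, and let $(f_n)_{n=1}^\infty$ and $(g_n)_{n=1}^\infty$ be Bessel sequences in $H$ with optimal Bessel bounds $B$ and $D$ and analysis operators $U$ and $V$, respectively. Suppose $I-V^*U$ is a compact operator on $H$. Then there exist finite sequences $(x_n)_{n=1}^k$ and $(y_n)_{n=1}^l$ in $H$ such that $(x_n)_{n=1}^k\cup(f_n)_{n=1}^\infty$ is a frame for $H$ with optimal upper frame bound $B$, and $(y_n)_{n=1}^l\cup(g_n)_{n=1}^\infty$ is a frame for $H$ with optimal upper frame bound $D$.
   Context: A Bessel sequence $(f_n)$ in $H$: there is $B>0$ with $\sum_n|\langle x,f_n\rangle|^2\le B\|x\|^2$ for all $x$; the optimal Bessel bound is the infimum of all such $B$. A frame additionally has a lower bound $A>0$ with $A\|x\|^2\le\sum_n|\langle x,f_n\rangle|^2$; the optimal upper frame bound is the infimum of upper bounds. The analysis operator is $U:H\to\ell^2$, $Ux=(\langle x,f_n\rangle)_n$. The notation $(x_n)_{n=1}^k\cup(f_n)_{n=1}^\infty$ denotes the sequence $x_1,\dots,x_k,f_1,f_2,\dots$. *)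

theory Defs
  imports "HOL-Analysis.Analysis"
begin

class complex_vector = real_vector +
  fixes scaleC :: "complex \<Rightarrow> 'a \<Rightarrow> 'a"
  assumes scaleC_add_right: "scaleC a (x + y) = scaleC a x + scaleC a y"
    and scaleC_add_left: "scaleC (a + b) x = scaleC a x + scaleC b x"
    and scaleC_scaleC: "scaleC a (scaleC b x) = scaleC (a * b) x"
    and scaleC_one: "scaleC 1 x = x"
    and scaleR_scaleC: "scaleR r x = scaleC (complex_of_real r) x"

class complex_inner = complex_vector + real_normed_vector +
  fixes cinner :: "'a \<Rightarrow> 'a \<Rightarrow> complex"
  assumes cinner_commute: "cinner x y = cnj (cinner y x)"
    and cinner_add_left: "cinner (x + y) z = cinner x z + cinner y z"
    and cinner_scaleC_left: "cinner (scaleC r x) y = cnj r * cinner x y"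
    and cinner_self_real: "Im (cinner x x) = 0"
    and cinner_self_nonneg: "0 \<le> Re (cinner x x)"
    and cinner_eq_zero_iff: "cinner x x = 0 \<longleftrightarrow> x = 0"
    and norm_eq_sqrt_cinner: "norm x = sqrt (Re (cinner x x))"

definition cspan :: "'a::complex_vector set \<Rightarrow> 'a set" where
  "cspan S = {(\<Sum>v\<in>F. scaleC (c v) v) | F c. finite F \<and> F \<subseteq> S}"

definition infinite_dimensional :: "'a::complex_vector itself \<Rightarrow> bool" where
  "infinite_dimensional _ \<longleftrightarrow> (\<forall>S::'a set. finite S \<longrightarrow> cspan S \<noteq> UNIV)"

definition separable_hilbert :: "'a::metric_space itself \<Rightarrow> bool" where
  "separable_hilbert _ \<longleftrightarrow> (\<exists>D::'a set. countable D \<and> closure D = UNIV)"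

text \<open>The paper's \<open>\<langle>x, f n\<rangle>\<close> (linear in x) is \<open>cinner (f n) x\<close> here.\<close>
definition bessel_bound :: "(nat \<Rightarrow> 'a::complex_inner) \<Rightarrow> real \<Rightarrow> bool" where
  "bessel_bound f B \<longleftrightarrow> B > 0 \<and>
     (\<forall>x. summable (\<lambda>n. (cmod (cinner (f n) x))\<^sup>2) \<and>
          (\<Sum>n. (cmod (cinner (f n) x))\<^sup>2) \<le> B * (norm x)\<^sup>2)"

definition bessel_seq :: "(nat \<Rightarrow> 'a::complex_inner) \<Rightarrow> bool" where
  "bessel_seq f \<longleftrightarrow> (\<exists>B. bessel_bound f B)"

text \<open>Optimal Bessel bound = optimal upper frame bound: infimum of all upper bounds.\<close>
definition opt_bessel_bound :: "(nat \<Rightarrow> 'a::complex_inner) \<Rightarrow> real" where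
  "opt_bessel_bound f = Inf {B. bessel_bound f B}"

definition is_frame :: "(nat \<Rightarrow> 'a::complex_inner) \<Rightarrow> bool" where
  "is_frame f \<longleftrightarrow> bessel_seq f \<and>
     (\<exists>A>0. \<forall>x. A * (norm x)\<^sup>2 \<le> (\<Sum>n. (cmod (cinner (f n) x))\<^sup>2))"

text \<open>\<open>V\<^sup>* U x = \<Sum>n \<langle>x, f n\<rangle> g n\<close> for analysis operators U of f and V of g.\<close>
definition synth_anal :: "(nat \<Rightarrow> 'a::complex_inner) \<Rightarrow> (nat \<Rightarrow> 'a) \<Rightarrow> 'a \<Rightarrow> 'a" where
  "synth_anal g f x = (\<Sum>n. scaleC (cinner (f n) x) (g n))"

definition compact_operator :: "('a::metric_space \<Rightarrow> 'b::metric_space) \<Rightarrow> bool" where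
  "compact_operator T \<longleftrightarrow> (\<forall>S. bounded S \<longrightarrow> compact (closure (T ` S)))"

text \<open>The sequence \<open>x\<^sub>1,\<dots>,x\<^sub>k, f\<^sub>1, f\<^sub>2, \<dots>\<close> (0-indexed here).\<close>
definition prepend :: "'a list \<Rightarrow> (nat \<Rightarrow> 'a) \<Rightarrow> nat \<Rightarrow> 'a" where
  "prepend xs f n = (if n < length xs then xs ! n else f (n - length xs))"

end

theory Submission
  imports Defs
begin


lemma cinner_zero_left[simp]: "cinner 0 (y::'a::complex_inner) = 0"
  using cinner_add_left[of "0::'a" 0 y] by simp

lemma cinner_zero_right[simp]: "cinner (x::'a::complex_inner) 0 = 0"
  using cinner_commute[of x 0] by simp

lemma cinner_add_right: "cinner (x::'a::complex_inner) (y + z) = cinner x y + cinner x z"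
  using cinner_commute[of x "y+z"] cinner_commute[of x y] cinner_commute[of x z] by (simp add: cinner_add_left)

lemma cinner_minus_left: "cinner (- x::'a::complex_inner) y = - cinner x y"
proof -
  have "cinner x y + cinner (-x) y = 0" using cinner_add_left[of x "-x" y] by simp
  then show ?thesis by (simp add: add_eq_0_iff)
qed

lemma cinner_diff_left: "cinner (x - x'::'a::complex_inner) y = cinner x y - cinner x' y"
  by (simp only: diff_conv_add_uminus cinner_add_left cinner_minus_left)

lemma cinner_diff_right: "cinner (x::'a::complex_inner) (y - y') = cinner x y - cinner x y'"
  using cinner_commute[of x "y-y'"] cinner_commute[of x y] cinner_commute[of x y'] by (simp add: cinner_diff_left)

lemma cinner_scaleC_right: "cinner (x::'a::complex_inner) (scaleC r y) = r * cinner x y"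
  using cinner_commute[of x "scaleC r y"] cinner_commute[of x y] by (simp add: cinner_scaleC_left)

lemma cinner_scaleR_left: "cinner (scaleR r x::'a::complex_inner) y = of_real r * cinner x y"
  by (simp add: scaleR_scaleC cinner_scaleC_left)

lemma cinner_scaleR_right: "cinner (x::'a::complex_inner) (scaleR r y) = of_real r * cinner x y"
  by (simp add: scaleR_scaleC cinner_scaleC_right)

lemma cinner_sum_left: "cinner (sum h A::'a::complex_inner) y = (\<Sum>a\<in>A. cinner (h a) y)"
  by (induction A rule: infinite_finite_induct) (auto simp: cinner_add_left)

lemma cinner_sum_right: "cinner (y::'a::complex_inner) (sum h A) = (\<Sum>a\<in>A. cinner y (h a))"
  by (induction A rule: infinite_finite_induct) (auto simp: cinner_add_right)

lemma cinner_self: "cinner (x::'a::complex_inner) x = complex_of_real ((norm x)^2)"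
proof -
  have "(norm x)^2 = Re (cinner x x)" using norm_eq_sqrt_cinner[of x] cinner_self_nonneg[of x] by simp
  then show ?thesis using cinner_self_real[of x] by (simp add: complex_eq_iff)
qed

lemma cmod_cinner_commute: "cmod (cinner (x::'a::complex_inner) y) = cmod (cinner y x)"
  using cinner_commute[of x y] by simp

lemma scaleC_zero_left[simp]: "scaleC 0 (x::'a::complex_vector) = 0"
  using scaleC_add_left[of 0 0 x] by simp

lemma scaleC_diff_left: "scaleC (a - b) (x::'a::complex_vector) = scaleC a x - scaleC b x"
  using scaleC_add_left[of "a - b" b x] by (simp add: eq_diff_eq)

lemma norm_scaleC: "norm (scaleC a (x::'a::complex_inner)) = cmod a * norm x"
proof -
  have "complex_of_real ((norm (scaleC a x))^2) = complex_of_real ((cmod a * norm x)^2)"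
    by (simp only: cinner_self[symmetric] cinner_scaleC_left cinner_scaleC_right)
       (simp add: cinner_self power_mult_distrib complex_norm_square[symmetric] mult.assoc
         complex_mult_cnj[symmetric] mult.commute mult.left_commute del: of_real_power)
  then have "(norm (scaleC a x))^2 = (cmod a * norm x)^2" using of_real_eq_iff by blast
  then show ?thesis by (simp add: power2_eq_iff_nonneg)
qed

lemma cauchy_schwarz: "cmod (cinner (x::'a::complex_inner) y) \<le> norm x * norm y"
proof (cases "x = 0")
  case True then show ?thesis by simp
next
  case False
  define a where "a = cinner x y"
  define n where "n = (norm x)^2"
  have n: "n > 0" using False by (simp add: n_def)
  define t where "t = a / complex_of_real n"
  define w where "w = y - scaleC t x"
  have "cinner w w = cinner y y - t * cinner y x - cnj t * cinner x y + cnj t * t * cinner x x"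
    unfolding w_def by (simp add: cinner_diff_left cinner_diff_right cinner_scaleC_left
        cinner_scaleC_right algebra_simps)
  also have "\<dots> = complex_of_real ((norm y)^2 - (cmod a)^2 / n)"
    using n unfolding t_def
    apply (simp only: cinner_self n_def[symmetric] a_def[symmetric] cinner_commute[of y x])
    apply (simp add: field_simps complex_norm_square[of a] power2_eq_square complex_mult_cnj[symmetric] del: of_real_power)
    using complex_norm_square[of a] by (simp only: power2_eq_square of_real_mult)
  finally have "0 \<le> (norm y)^2 - (cmod a)^2 / n"
    using cinner_self_nonneg[of w] by simp
  then have "(cmod a)^2 \<le> (norm x * norm y)^2" using n by (simp add: n_def field_simps power_mult_distrib)
  then show ?thesis unfolding a_def by (rule power2_le_imp_le) simp
qed




definition qf :: "(nat \<Rightarrow> 'a::complex_inner) \<Rightarrow> 'a \<Rightarrow> real" where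
  "qf f x = (\<Sum>n. (cmod (cinner (f n) x))\<^sup>2)"

lemma bounded_linear_cinner_right: "bounded_linear (\<lambda>x. cinner (a::'a::complex_inner) x)"
proof (rule bounded_linear_intro[where K="norm a"])
  show "cinner a (x + y) = cinner a x + cinner a y" for x y by (rule cinner_add_right)
  show "cinner a (r *\<^sub>R x) = r *\<^sub>R cinner a x" for r x by (simp add: cinner_scaleR_right scaleR_conv_of_real)
  show "norm (cinner a x) \<le> norm x * norm a" for x using cauchy_schwarz[of a x] by (simp add: mult.commute)
qed

lemma bounded_linear_cinner_left: "bounded_linear (\<lambda>x. cinner x (a::'a::complex_inner))"
proof (rule bounded_linear_intro[where K="norm a"])
  show "cinner (x + y) a = cinner x a + cinner y a" for x y by (rule cinner_add_left)
  show "cinner (r *\<^sub>R x) a = r *\<^sub>R cinner x a" for r x by (simp add: cinner_scaleR_left scaleR_conv_of_real)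
  show "norm (cinner x a) \<le> norm x * norm a" for x using cauchy_schwarz[of x a] by simp
qed

lemma bessel_boundE:
  assumes "bessel_bound f B"
  shows "B > 0" "summable (\<lambda>n. (cmod (cinner (f n) x))\<^sup>2)" "qf f x \<le> B * (norm x)\<^sup>2"
  using assms unfolding bessel_bound_def qf_def by auto

lemma qf_nonneg: "bessel_bound f B \<Longrightarrow> 0 \<le> qf f x"
  unfolding qf_def by (rule suminf_nonneg) (auto dest: bessel_boundE)

lemma term_le_qf: "bessel_bound f B \<Longrightarrow> (cmod (cinner (f m) x))\<^sup>2 \<le> qf f x"
  unfolding qf_def using sum_le_suminf[of "\<lambda>n. (cmod (cinner (f n) x))\<^sup>2" "{m}"]
  by (auto dest: bessel_boundE)

lemma synth_finite:
  fixes g :: "nat \<Rightarrow> 'a::complex_inner"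
  assumes g: "bessel_bound g D" and F: "finite F"
  shows "norm (\<Sum>n\<in>F. scaleC (c n) (g n)) \<le> sqrt (D * (\<Sum>n\<in>F. (cmod (c n))\<^sup>2))"
proof -
  define z where "z = (\<Sum>n\<in>F. scaleC (c n) (g n))"
  have D: "D > 0" using bessel_boundE[OF g] by simp
  have "cinner z z = (\<Sum>n\<in>F. c n * cinner z (g n))"
    by (simp add: z_def[of] cinner_sum_right cinner_scaleC_right)
  then have "complex_of_real ((norm z)^2) = (\<Sum>n\<in>F. c n * cinner z (g n))"
    by (simp add: cinner_self)
  then have "cmod (complex_of_real ((norm z)^2)) = cmod (\<Sum>n\<in>F. c n * cinner z (g n))"
    by simp
  then have "(norm z)^2 = cmod (\<Sum>n\<in>F. c n * cinner z (g n))"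
    by (simp add: norm_power)
  also have "\<dots> \<le> (\<Sum>n\<in>F. \<bar>cmod (c n)\<bar> * \<bar>cmod (cinner (g n) z)\<bar>)"
    by (rule order_trans[OF norm_sum]) (simp add: norm_mult cmod_cinner_commute)
  also have "\<dots> \<le> L2_set (\<lambda>n. cmod (c n)) F * L2_set (\<lambda>n. cmod (cinner (g n) z)) F"
    by (rule L2_set_mult_ineq)
  also have "L2_set (\<lambda>n. cmod (cinner (g n) z)) F \<le> sqrt D * norm z"
  proof -
    have "(\<Sum>n\<in>F. (cmod (cinner (g n) z))\<^sup>2) \<le> qf g z"
      unfolding qf_def by (rule sum_le_suminf) (use F bessel_boundE[OF g] in auto)
    also have "\<dots> \<le> D * (norm z)^2" by (rule bessel_boundE[OF g])
    finally have "L2_set (\<lambda>n. cmod (cinner (g n) z)) F \<le> sqrt (D * (norm z)^2)"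
      unfolding L2_set_def by simp
    then show ?thesis by (simp add: real_sqrt_mult)
  qed
  finally have *: "(norm z)^2 \<le> L2_set (\<lambda>n. cmod (c n)) F * (sqrt D * norm z)"
    by (simp add: mult_left_mono L2_set_nonneg)
  have "norm z \<le> L2_set (\<lambda>n. cmod (c n)) F * sqrt D"
  proof (cases "norm z = 0")
    case True then show ?thesis using D by (simp add: L2_set_nonneg)
  next
    case False
    then have "norm z > 0" by simp
    with * show ?thesis by (simp add: power2_eq_square mult.assoc[symmetric])
  qed
  then show ?thesis unfolding z_def L2_set_def by (simp add: real_sqrt_mult mult.commute)
qed

lemma synth_summable:
  fixes g :: "nat \<Rightarrow> 'a::{complex_inner,complete_space}"
  assumes g: "bessel_bound g D" and c: "summable (\<lambda>n. (cmod (c n))\<^sup>2)"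
  shows "summable (\<lambda>n. scaleC (c n) (g n))"
    and "norm (\<Sum>n. scaleC (c n) (g n)) \<le> sqrt (D * (\<Sum>n. (cmod (c n))\<^sup>2))"
proof -
  have D: "D > 0" using bessel_boundE[OF g] by simp
  have tail: "\<exists>N. \<forall>m\<ge>N. \<forall>n. norm (\<Sum>k = m..<n. scaleC (c k) (g k)) < e" if e: "e > 0" for e
  proof -
    have "e^2 / D > 0" using D e by simp
    then obtain N where N: "\<forall>m\<ge>N. \<forall>n. norm (sum (\<lambda>n. (cmod (c n))\<^sup>2) {m..<n}) < e^2 / D"
      using c unfolding summable_Cauchy by blast
    show "\<exists>N. \<forall>m\<ge>N. \<forall>n. norm (\<Sum>k = m..<n. scaleC (c k) (g k)) < e"
    proof (intro exI allI impI)
      fix m n assume "N \<le> m"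
      then have "(\<Sum>k = m..<n. (cmod (c k))\<^sup>2) < e^2 / D"
      proof -
        have "norm (\<Sum>k = m..<n. (cmod (c k))\<^sup>2) < e^2 / D" using N \<open>N \<le> m\<close> by blast
        moreover have "0 \<le> (\<Sum>k = m..<n. (cmod (c k))\<^sup>2)" by (rule sum_nonneg) simp
        ultimately show ?thesis by simp
      qed
      then have "D * (\<Sum>k = m..<n. (cmod (c k))\<^sup>2) < e^2" using D by (simp add: field_simps)
      then have "sqrt (D * (\<Sum>k = m..<n. (cmod (c k))\<^sup>2)) < e"
        using e by (metis real_sqrt_abs real_sqrt_less_mono abs_of_pos)
      then show "norm (\<Sum>k = m..<n. scaleC (c k) (g k)) < e"
        using synth_finite[OF g, of "{m..<n}" c] by simp
    qed
  qed
  have diff: "(\<Sum>i<m. h i) - (\<Sum>i<n. h i) = (\<Sum>i=n..<m. h i)" if "n \<le> m" for n m and h :: "nat \<Rightarrow> 'a"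
    using that by (metis atLeast0LessThan sum_diff_nat_ivl le0)
  have "Cauchy (\<lambda>N. \<Sum>i<N. scaleC (c i) (g i))"
  proof (rule CauchyI)
    fix e :: real assume "e > 0"
    then obtain N where N: "\<forall>m\<ge>N. \<forall>n. norm (\<Sum>k = m..<n. scaleC (c k) (g k)) < e"
      using tail by blast
    show "\<exists>M. \<forall>m\<ge>M. \<forall>n\<ge>M. norm ((\<Sum>i<m. scaleC (c i) (g i)) - (\<Sum>i<n. scaleC (c i) (g i))) < e"
    proof (intro exI allI impI)
      fix m n assume mn: "N \<le> m" "N \<le> n"
      show "norm ((\<Sum>i<m. scaleC (c i) (g i)) - (\<Sum>i<n. scaleC (c i) (g i))) < e"
      proof (cases "n \<le> m")
        case True then show ?thesis using N mn diff[OF True] by simp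
      next
        case False then have "m \<le> n" by simp
        then show ?thesis using N mn diff[OF \<open>m \<le> n\<close>, of "\<lambda>i. scaleC (c i) (g i)"]
          by (metis norm_minus_commute)
      qed
    qed
  qed
  then show "summable (\<lambda>n. scaleC (c n) (g n))"
    unfolding summable_iff_convergent by (simp add: Cauchy_convergent_iff)
  then have "(\<lambda>n. norm (\<Sum>i<n. scaleC (c i) (g i))) \<longlonglongrightarrow> norm (\<Sum>n. scaleC (c n) (g n))"
    by (intro tendsto_norm summable_LIMSEQ)
  then show "norm (\<Sum>n. scaleC (c n) (g n)) \<le> sqrt (D * (\<Sum>n. (cmod (c n))\<^sup>2))"
  proof (rule LIMSEQ_le_const2, intro exI allI impI)
    fix n :: nat
    have "(\<Sum>i<n. (cmod (c i))\<^sup>2) \<le> (\<Sum>n. (cmod (c n))\<^sup>2)"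
      by (rule sum_le_suminf[OF c]) auto
    then have "sqrt (D * (\<Sum>i<n. (cmod (c i))\<^sup>2)) \<le> sqrt (D * (\<Sum>n. (cmod (c n))\<^sup>2))"
      using D by simp
    then show "norm (\<Sum>i<n. scaleC (c i) (g i)) \<le> sqrt (D * (\<Sum>n. (cmod (c n))\<^sup>2))"
      using synth_finite[OF g, of "{..<n}" c] by (meson finite_lessThan order_trans)
  qed
qed

lemma synth_anal_bound:
  fixes g :: "nat \<Rightarrow> 'a::{complex_inner,complete_space}"
  assumes g: "bessel_bound g D" and f: "bessel_bound f B"
  shows "summable (\<lambda>n. scaleC (cinner (f n) x) (g n))"
    and "norm (synth_anal g f x) \<le> sqrt (D * qf f x)"
  using synth_summable[OF g bessel_boundE(2)[OF f, of x]] unfolding synth_anal_def qf_def by auto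

lemma synth_anal_diff:
  fixes g :: "nat \<Rightarrow> 'a::{complex_inner,complete_space}"
  assumes g: "bessel_bound g D" and f: "bessel_bound f B"
  shows "synth_anal g f (x - y) = synth_anal g f x - synth_anal g f y"
proof -
  have "synth_anal g f x - synth_anal g f y =
    (\<Sum>n. scaleC (cinner (f n) x) (g n) - scaleC (cinner (f n) y) (g n))"
    unfolding synth_anal_def
    by (rule suminf_diff) (rule synth_anal_bound[OF g f])+
  then show ?thesis unfolding synth_anal_def by (simp add: cinner_diff_right scaleC_diff_left)
qed

lemma synth_anal_adjoint:
  fixes g :: "nat \<Rightarrow> 'a::{complex_inner,complete_space}"
  assumes g: "bessel_bound g D" and f: "bessel_bound f B"
  shows "cinner (synth_anal g f x) y = cinner x (synth_anal f g y)"
proof -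
  have "cinner (synth_anal g f x) y = (\<Sum>n. cinner (scaleC (cinner (f n) x) (g n)) y)"
    unfolding synth_anal_def
    by (rule bounded_linear.suminf[OF bounded_linear_cinner_left synth_anal_bound(1)[OF g f]])
  also have "\<dots> = (\<Sum>n. cinner x (scaleC (cinner (g n) y) (f n)))"
    by (simp add: cinner_scaleC_left cinner_scaleC_right cinner_commute[of "f _" x] mult.commute)
  also have "\<dots> = cinner x (synth_anal f g y)"
    unfolding synth_anal_def
    by (rule bounded_linear.suminf[OF bounded_linear_cinner_right synth_anal_bound(1)[OF f g], symmetric])
  finally show ?thesis .
qed




definition orthonormal :: "'a::complex_inner set \<Rightarrow> bool" where
  "orthonormal E \<longleftrightarrow> (\<forall>u\<in>E. cinner u u = 1) \<and> (\<forall>u\<in>E. \<forall>v\<in>E. u \<noteq> v \<longrightarrow> cinner u v = 0)"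

definition proj :: "'a::complex_inner set \<Rightarrow> 'a \<Rightarrow> 'a" where
  "proj E x = (\<Sum>v\<in>E. scaleC (cinner v x) v)"

lemma cinner_proj:
  assumes "finite E" "orthonormal E" "u \<in> E"
  shows "cinner u (proj E x) = cinner u x"
proof -
  have "cinner u (proj E x) = (\<Sum>v\<in>E. cinner v x * cinner u v)"
    by (simp add: proj_def cinner_sum_right cinner_scaleC_right)
  also have "\<dots> = (\<Sum>v\<in>E. if v = u then cinner u x else 0)"
    using assms(2,3) unfolding orthonormal_def by (intro sum.cong) auto
  also have "\<dots> = cinner u x" using assms(1,3) by simp
  finally show ?thesis .
qed

lemma pythagoras:
  assumes "cinner a b = 0"
  shows "(norm (a + b::'a::complex_inner))^2 = (norm a)^2 + (norm b)^2"
proof -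
  have "cinner b a = 0" using assms cinner_commute[of b a] by simp
  then have "cinner (a + b) (a + b) = cinner a a + cinner b b"
    using assms by (simp add: cinner_add_left cinner_add_right)
  then have "complex_of_real ((norm (a+b))^2) = complex_of_real ((norm a)^2 + (norm b)^2)"
    by (simp add: cinner_self)
  then show ?thesis using of_real_eq_iff by blast
qed

lemma cnj_mult_self: "cnj a * a = complex_of_real ((cmod a)^2)"
  by (metis complex_norm_square mult.commute of_real_power)

lemma cinner_proj_left: "cinner (proj E x) w = (\<Sum>v\<in>E. cnj (cinner v x) * cinner v w)"
  unfolding proj_def cinner_sum_left cinner_scaleC_left by (rule refl)

lemma orth_proj_diff:
  assumes "finite E" "orthonormal E" "v \<in> E"
  shows "cinner v (x - proj E x) = 0"
  using assms by (simp add: cinner_diff_right cinner_proj)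

lemma norm_proj_sq:
  assumes "finite E" "orthonormal E"
  shows "(norm (proj E x))^2 = (\<Sum>v\<in>E. (cmod (cinner v x))^2)"
proof -
  have "cinner (proj E x) (proj E x) = (\<Sum>v\<in>E. cnj (cinner v x) * cinner v (proj E x))"
    by (rule cinner_proj_left)
  also have "\<dots> = (\<Sum>v\<in>E. complex_of_real ((cmod (cinner v x))^2))"
    using assms by (intro sum.cong) (auto simp: cinner_proj cnj_mult_self simp del: of_real_power)
  finally have "complex_of_real ((norm (proj E x))^2) = complex_of_real (\<Sum>v\<in>E. (cmod (cinner v x))^2)"
    by (simp add: cinner_self del: of_real_power)
  then show ?thesis using of_real_eq_iff by blast
qed

lemma proj_orth:
  assumes "finite E" "orthonormal E"
  shows "cinner (proj E x) (x - proj E x) = 0"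
  using assms by (simp add: cinner_proj_left orth_proj_diff)

lemma norm_split:
  assumes "finite E" "orthonormal E"
  shows "(norm x)^2 = (\<Sum>v\<in>E. (cmod (cinner v x))^2) + (norm (x - proj E x))^2"
  using pythagoras[OF proj_orth[OF assms, of x]] norm_proj_sq[OF assms, of x] by simp


definition seqcomp :: "('a::real_normed_vector \<Rightarrow> 'a) \<Rightarrow> bool" where
  "seqcomp T \<longleftrightarrow> (\<forall>y::nat \<Rightarrow> 'a. bounded (range y) \<longrightarrow> (\<exists>r. strict_mono r \<and> Cauchy (\<lambda>n. T (y (r n)))))"

lemma maximal_on:
  fixes T :: "'a::complex_inner \<Rightarrow> 'a"
  assumes T: "seqcomp T" and fixN: "\<And>z. z \<in> N \<Longrightarrow> T z = z"
    and sc: "\<And>z a. z \<in> N \<Longrightarrow> scaleC a z \<in> N"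
  shows "\<exists>E. finite E \<and> E \<subseteq> N \<and> orthonormal E \<and> (\<forall>z\<in>N. (\<forall>v\<in>E. cinner v z = 0) \<longrightarrow> z = 0)"
proof (rule ccontr)
  assume "\<not> ?thesis"
  then have H: "\<exists>z\<in>N. (\<forall>v\<in>E. cinner v z = 0) \<and> z \<noteq> 0" if "finite E" "E \<subseteq> N" "orthonormal E" for E
    using that by blast
  have ext: "\<exists>e. e \<in> N \<and> cinner e e = 1 \<and> (\<forall>v\<in>E. cinner v e = 0)"
    if a: "finite E" "E \<subseteq> N" "orthonormal E" for E
  proof -
    obtain z where z: "z \<in> N" "\<forall>v\<in>E. cinner v z = 0" "z \<noteq> 0" using H[OF a] by blast
    define e where "e = scaleC (complex_of_real (1 / norm z)) z"
    have "cinner e e = complex_of_real ((1/norm z) * (1/norm z) * (norm z)^2)"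
      unfolding e_def cinner_scaleC_left cinner_scaleC_right cinner_self[of z] by simp
    also have "\<dots> = 1" using z(3) by (simp add: power2_eq_square)
    finally have ee: "cinner e e = 1" .
    have eN: "e \<in> N" using sc z(1) unfolding e_def by blast
    have "\<forall>v\<in>E. cinner v e = 0" using z(2) unfolding e_def by (simp add: cinner_scaleC_right)
    then show ?thesis using ee eN by blast
  qed
  define nxt where "nxt E = (SOME e. e \<in> N \<and> cinner e e = 1 \<and> (\<forall>v\<in>E. cinner v e = (0::complex)))" for E
  define Es where "Es n = rec_nat {} (\<lambda>_ E. insert (nxt E) E) n" for n
  have Es0: "Es 0 = {}" and EsS: "Es (Suc n) = insert (nxt (Es n)) (Es n)" for n
    by (simp_all add: Es_def)
  have P: "finite (Es n) \<and> Es n \<subseteq> N \<and> orthonormal (Es n)" for n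
  proof (induction n)
    case 0 then show ?case by (simp add: Es0 orthonormal_def)
  next
    case (Suc n)
    define e where "e = nxt (Es n)"
    have e: "e \<in> N \<and> cinner e e = 1 \<and> (\<forall>v\<in>Es n. cinner v e = 0)"
      unfolding e_def nxt_def by (rule someI_ex) (use ext Suc in blast)
    then have e': "\<forall>v\<in>Es n. cinner e v = 0" by (metis cinner_commute complex_cnj_zero)
    show ?case using Suc e e' unfolding EsS e_def[symmetric] orthonormal_def by auto
  qed
  define e where "e n = nxt (Es n)" for n
  have e: "e n \<in> N \<and> cinner (e n) (e n) = 1 \<and> (\<forall>v\<in>Es n. cinner v (e n) = 0)" for n
    unfolding e_def nxt_def by (rule someI_ex) (use ext P in blast)
  have mem: "m < n \<Longrightarrow> e m \<in> Es n" for m n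
  proof (induction n)
    case 0 then show ?case by simp
  next
    case (Suc n) then show ?case by (auto simp: EsS e_def less_Suc_eq)
  qed
  have orth: "m < n \<Longrightarrow> cinner (e m) (e n) = 0" for m n using e mem by blast
  have ne: "norm (e n) = 1" for n
  proof -
    have "complex_of_real ((norm (e n))^2) = 1" using e[of n] by (simp add: cinner_self)
    then have "(norm (e n))^2 = 1" by (metis of_real_eq_1_iff)
    then show ?thesis using norm_ge_zero[of "e n"] by (auto simp: power2_eq_1_iff)
  qed
  have "bounded (range e)" unfolding bounded_iff using ne by auto
  then obtain r where r: "strict_mono r" "Cauchy (\<lambda>n. T (e (r n)))" using T unfolding seqcomp_def by blast
  then have "Cauchy (\<lambda>n. e (r n))" using fixN e by simp
  then obtain M where M: "\<forall>m\<ge>M. \<forall>n\<ge>M. norm (e (r m) - e (r n)) < 1"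
    using CauchyD[of "\<lambda>n. e (r n)" 1] by auto
  define p q where "p = r M" and "q = r (Suc M)"
  have pq: "p < q" using r(1) unfolding p_def q_def strict_mono_def by simp
  have "cinner (e p - e q) (e p - e q) = 2"
  proof -
    have "cinner (e q) (e p) = 0" using orth[OF pq] cinner_commute[of "e q" "e p"] by simp
    then show ?thesis using orth[OF pq] e[of p] e[of q] by (simp add: cinner_diff_left cinner_diff_right)
  qed
  then have "(norm (e p - e q))^2 = 2" using cinner_self[of "e p - e q"] by (metis of_real_numeral of_real_eq_iff)
  moreover have "norm (e p - e q) < 1" using M unfolding p_def q_def by simp
  then have "(norm (e p - e q))^2 < 1" by (simp add: power_less_one_iff)
  ultimately show False by simp
qed




lemma qf_zero[simp]: "qf f 0 = 0" by (simp add: qf_def)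

lemma qf_scale:
  assumes "bessel_bound f B"
  shows "qf f (scaleC a y) = (cmod a)^2 * qf f y"
proof -
  have "qf f (scaleC a y) = (\<Sum>n. (cmod a)^2 * (cmod (cinner (f n) y))\<^sup>2)"
    by (simp add: qf_def cinner_scaleC_right norm_mult power_mult_distrib)
  also have "\<dots> = (cmod a)^2 * qf f y"
    unfolding qf_def by (rule suminf_mult[OF bessel_boundE(2)[OF assms]])
  finally show ?thesis .
qed

lemma bounded_below:
  fixes f g :: "nat \<Rightarrow> 'a::{complex_inner, complete_space}"
  assumes f0: "bessel_bound f B0" and g0: "bessel_bound g D0"
    and T: "seqcomp (\<lambda>x. x - synth_anal g f x)"
    and E: "finite E" "orthonormal E"
    and max: "\<forall>z. (\<forall>n. cinner (f n) z = 0) \<longrightarrow> (\<forall>v\<in>E. cinner v z = 0) \<longrightarrow> z = 0"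
  shows "\<exists>c>0. \<forall>y. (\<forall>v\<in>E. cinner v y = 0) \<longrightarrow> c * (norm y)^2 \<le> qf f y"
proof (rule ccontr)
  assume "\<not> ?thesis"
  then have H: "\<exists>y. (\<forall>v\<in>E. cinner v y = 0) \<and> qf f y < c * (norm y)^2" if "c > 0" for c
    using that by (meson not_le)
  have "\<exists>y. (\<forall>v\<in>E. cinner v y = 0) \<and> norm y = 1 \<and> qf f y < inverse (real n + 1)" for n
  proof -
    obtain y where y: "\<forall>v\<in>E. cinner v y = 0" "qf f y < inverse (real n + 1) * (norm y)^2"
      using H[of "inverse (real n + 1)"] by auto
    have "y \<noteq> 0" using y(2) by auto
    then have ny: "norm y > 0" by simp
    define y' where "y' = scaleC (complex_of_real (1 / norm y)) y"
    have "norm y' = 1" using ny by (simp add: y'_def norm_scaleC norm_divide)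
    moreover have "\<forall>v\<in>E. cinner v y' = 0" using y(1) by (simp add: y'_def cinner_scaleC_right)
    moreover have "qf f y' = qf f y / (norm y)^2"
      using qf_scale[OF f0] ny by (simp add: y'_def power_divide norm_divide)
    moreover have "qf f y / (norm y)^2 < inverse (real n + 1)"
      using y(2) ny by (simp add: divide_less_eq)
    ultimately show ?thesis by auto
  qed
  then obtain ys where ys: "\<And>n. \<forall>v\<in>E. cinner v (ys n) = 0" "\<And>n. norm (ys n) = 1"
    "\<And>n. qf f (ys n) < inverse (real n + 1)"
    by metis
  have "bounded (range ys)" unfolding bounded_iff using ys(2) by auto
  then obtain r where r: "strict_mono r" "Cauchy (\<lambda>n. ys (r n) - synth_anal g f (ys (r n)))"
    using T unfolding seqcomp_def by blast
  then obtain l0 where l0: "(\<lambda>n. ys (r n) - synth_anal g f (ys (r n))) \<longlonglongrightarrow> l0"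
    using Cauchy_convergent_iff convergent_def by blast
  have qsmall: "qf f (ys (r n)) \<le> inverse (real n + 1)" for n
  proof -
    have "n \<le> r n" using seq_suble[OF r(1)] by simp
    then have "inverse (real (r n) + 1) \<le> inverse (real n + 1)" by (intro le_imp_inverse_le) auto
    then show ?thesis using ys(3)[of "r n"] by linarith
  qed
  have inv0: "(\<lambda>n. inverse (real n + 1)) \<longlonglongrightarrow> 0"
  proof -
    have "(\<lambda>n. inverse (real n + 1)) = (\<lambda>n. inverse (real (Suc n)))" by (simp add: add.commute)
    then show ?thesis using LIMSEQ_inverse_real_of_nat by simp
  qed
  have D0: "D0 > 0" using bessel_boundE(1)[OF g0] .
  have "(\<lambda>n. synth_anal g f (ys (r n))) \<longlonglongrightarrow> 0"
  proof (rule Lim_null_comparison)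
    show "\<forall>\<^sub>F n in sequentially. norm (synth_anal g f (ys (r n))) \<le> sqrt (D0 * inverse (real n + 1))"
    proof (rule always_eventually, rule allI)
      fix n
      have "norm (synth_anal g f (ys (r n))) \<le> sqrt (D0 * qf f (ys (r n)))"
        by (rule synth_anal_bound(2)[OF g0 f0])
      also have "\<dots> \<le> sqrt (D0 * inverse (real n + 1))"
        using qsmall[of n] D0 by simp
      finally show "norm (synth_anal g f (ys (r n))) \<le> sqrt (D0 * inverse (real n + 1))" .
    qed
    show "(\<lambda>n. sqrt (D0 * inverse (real n + 1))) \<longlonglongrightarrow> 0"
      using tendsto_real_sqrt[OF tendsto_mult[OF tendsto_const inv0, of D0]] by simp
  qed
  from tendsto_add[OF l0 this] have lim: "(\<lambda>n. ys (r n)) \<longlonglongrightarrow> l0" by simp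
  have "norm l0 = 1"
  proof -
    have "(\<lambda>n. norm (ys (r n))) \<longlonglongrightarrow> norm l0" by (rule tendsto_norm[OF lim])
    then show ?thesis using ys(2) LIMSEQ_unique[OF tendsto_const] by fastforce
  qed
  moreover have "\<forall>v\<in>E. cinner v l0 = 0"
  proof
    fix v assume "v \<in> E"
    have "(\<lambda>n. cinner v (ys (r n))) \<longlonglongrightarrow> cinner v l0"
      by (rule bounded_linear.tendsto[OF bounded_linear_cinner_right lim])
    then show "cinner v l0 = 0" using ys(1) \<open>v \<in> E\<close> LIMSEQ_unique[OF tendsto_const] by fastforce
  qed
  moreover have "\<forall>m. cinner (f m) l0 = 0"
  proof
    fix m
    have a: "(\<lambda>n. cinner (f m) (ys (r n))) \<longlonglongrightarrow> cinner (f m) l0"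
      by (rule bounded_linear.tendsto[OF bounded_linear_cinner_right lim])
    have "(\<lambda>n. cinner (f m) (ys (r n))) \<longlonglongrightarrow> 0"
    proof (rule Lim_null_comparison)
      show "\<forall>\<^sub>F n in sequentially. norm (cinner (f m) (ys (r n))) \<le> sqrt (inverse (real n + 1))"
      proof (rule always_eventually, rule allI)
        fix n
        have "(cmod (cinner (f m) (ys (r n))))^2 \<le> inverse (real n + 1)"
          using term_le_qf[OF f0, of m "ys (r n)"] qsmall[of n] by linarith
        then show "norm (cinner (f m) (ys (r n))) \<le> sqrt (inverse (real n + 1))"
          by (simp add: real_le_rsqrt)
      qed
      show "(\<lambda>n. sqrt (inverse (real n + 1))) \<longlonglongrightarrow> 0"
        using tendsto_real_sqrt[OF inv0] by simp
    qed
    then show "cinner (f m) l0 = 0" using a LIMSEQ_unique by blast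
  qed
  ultimately show False using max by force
qed




lemma adj_seqcomp:
  fixes f g :: "nat \<Rightarrow> 'a::{complex_inner, complete_space}"
  assumes f0: "bessel_bound f B0" and g0: "bessel_bound g D0"
    and T: "seqcomp (\<lambda>x. x - synth_anal g f x)"
  shows "seqcomp (\<lambda>y. y - synth_anal f g y)"
  unfolding seqcomp_def
proof (intro allI impI)
  fix y :: "nat \<Rightarrow> 'a" assume "bounded (range y)"
  then obtain M where M: "M > 0" "\<And>n. norm (y n) \<le> M" unfolding bounded_pos by auto
  define K where "K x = x - synth_anal g f x" for x
  define Ks where "Ks x = x - synth_anal f g x" for x
  have B0: "B0 > 0" and D0: "D0 > 0" using bessel_boundE(1) f0 g0 by auto
  have Kdiff: "K (a - b) = K a - K b" for a b
    unfolding K_def using synth_anal_diff[OF g0 f0, of a b] by simp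
  have Ksdiff: "Ks (a - b) = Ks a - Ks b" for a b
    unfolding Ks_def using synth_anal_diff[OF f0 g0, of a b] by simp
  have adj: "cinner (K u) v = cinner u (Ks v)" for u v
    unfolding K_def Ks_def by (simp add: cinner_diff_left cinner_diff_right synth_anal_adjoint[OF g0 f0])
  define w where "w n = Ks (y n)" for n
  have "bounded (range w)"
    unfolding bounded_iff
  proof (intro exI ballI)
    fix z assume "z \<in> range w"
    then obtain n where z: "z = w n" by auto
    have "norm (synth_anal f g (y n)) \<le> sqrt (B0 * qf g (y n))"
      by (rule synth_anal_bound(2)[OF f0 g0])
    also have "\<dots> \<le> sqrt (B0 * (D0 * M^2))"
    proof -
      have "(norm (y n))^2 \<le> M^2" using M(2)[of n] by (simp add: power_mono)
      then have "qf g (y n) \<le> D0 * M^2"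
        using bessel_boundE(3)[OF g0, of "y n"] D0 by (meson mult_left_mono less_imp_le order_trans)
      then show ?thesis using B0 by simp
    qed
    finally have "norm (synth_anal f g (y n)) \<le> sqrt (B0 * (D0 * M^2))" .
    then show "norm z \<le> M + sqrt (B0 * (D0 * M^2))"
      unfolding z w_def Ks_def using M(2)[of n] norm_triangle_ineq4[of "y n" "synth_anal f g (y n)"]
      by linarith
  qed
  then obtain r where r: "strict_mono r" "Cauchy (\<lambda>n. K (w (r n)))"
    using T unfolding seqcomp_def K_def by blast
  have "Cauchy (\<lambda>n. Ks (y (r n)))"
  proof (rule CauchyI)
    fix e :: real assume e: "e > 0"
    then have "e^2 / (2*M) > 0" using M by simp
    then obtain N where N: "\<forall>m\<ge>N. \<forall>n\<ge>N. norm (K (w (r m)) - K (w (r n))) < e^2 / (2*M)"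
      using CauchyD[OF r(2)] by blast
    show "\<exists>N. \<forall>m\<ge>N. \<forall>n\<ge>N. norm (Ks (y (r m)) - Ks (y (r n))) < e"
    proof (intro exI allI impI)
      fix m n assume mn: "N \<le> m" "N \<le> n"
      define d where "d = y (r m) - y (r n)"
      have Ksd: "Ks d = w (r m) - w (r n)" unfolding d_def w_def by (rule Ksdiff)
      have KKsd: "K (Ks d) = K (w (r m)) - K (w (r n))" unfolding Ksd by (rule Kdiff)
      have nd: "norm d \<le> 2 * M" unfolding d_def
        using norm_triangle_ineq4[of "y (r m)" "y (r n)"] M(2)[of "r m"] M(2)[of "r n"] by linarith
      have "complex_of_real ((norm (Ks d))^2) = cinner (K (Ks d)) d"
        by (simp add: adj cinner_self)
      then have "(norm (Ks d))^2 = cmod (cinner (K (Ks d)) d)"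
        by (metis norm_of_real abs_of_nonneg zero_le_power2)
      also have "\<dots> \<le> norm (K (Ks d)) * norm d" by (rule cauchy_schwarz)
      also have "\<dots> \<le> norm (K (Ks d)) * (2 * M)" using nd by (simp add: mult_left_mono)
      also have "\<dots> < e^2 / (2*M) * (2 * M)"
        using N mn M(1) unfolding KKsd by (intro mult_strict_right_mono) auto
      also have "\<dots> = e^2" using M(1) by simp
      finally have "(norm (Ks d))^2 < e^2" .
      then have "norm (Ks d) < e" using e by (simp add: power_less_imp_less_base)
      then show "norm (Ks (y (r m)) - Ks (y (r n))) < e"
        using Ksdiff[of "y (r m)" "y (r n)"] unfolding d_def by simp
    qed
  qed
  then show "\<exists>r. strict_mono r \<and> Cauchy (\<lambda>n. y (r n) - synth_anal f g (y (r n)))"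
    using r(1) unfolding Ks_def by blast
qed

lemma compact_seqcomp:
  fixes T :: "'a::real_normed_vector \<Rightarrow> 'a"
  assumes "compact_operator T"
  shows "seqcomp T"
  unfolding seqcomp_def
proof (intro allI impI)
  fix y :: "nat \<Rightarrow> 'a" assume "bounded (range y)"
  then have "compact (closure (T ` range y))" using assms unfolding compact_operator_def by blast
  then have "seq_compact (closure (T ` range y))" by (rule compact_imp_seq_compact)
  moreover have "\<forall>n. T (y n) \<in> closure (T ` range y)" by (intro allI subsetD[OF closure_subset]) simp
  ultimately obtain l r where "strict_mono (r :: nat \<Rightarrow> nat)" "((\<lambda>n. T (y n)) \<circ> r) \<longlonglongrightarrow> l"
    by (rule seq_compactE)
  then show "\<exists>r. strict_mono r \<and> Cauchy (\<lambda>n. T (y (r n)))"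
    using LIMSEQ_imp_Cauchy by (auto simp: o_def)
qed




lemma frame_ext:
  fixes f g :: "nat \<Rightarrow> 'a::{complex_inner, complete_space}"
  assumes inf: "infinite_dimensional TYPE('a)"
    and f: "bessel_seq f" and g: "bessel_seq g"
    and T: "seqcomp (\<lambda>x. x - synth_anal g f x)"
  shows "\<exists>xs. is_frame (prepend xs f) \<and> opt_bessel_bound (prepend xs f) = opt_bessel_bound f"
proof -
  obtain B0 where f0: "bessel_bound f B0" using f unfolding bessel_seq_def by blast
  obtain D0 where g0: "bessel_bound g D0" using g unfolding bessel_seq_def by blast
  define N where "N = {z. \<forall>n. cinner (f n) z = 0}"
  have fixN: "x - synth_anal g f x = x" if "x \<in> N" for x
    using that by (simp add: N_def synth_anal_def)
  have sc: "scaleC a z \<in> N" if "z \<in> N" for z a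
    using that by (simp add: N_def cinner_scaleC_right)
  obtain E where E: "finite E" "E \<subseteq> N" "orthonormal E"
    and max: "\<forall>z\<in>N. (\<forall>v\<in>E. cinner v z = 0) \<longrightarrow> z = 0"
    using maximal_on[OF T fixN sc] by blast
  have max': "\<forall>z. (\<forall>n. cinner (f n) z = 0) \<longrightarrow> (\<forall>v\<in>E. cinner v z = 0) \<longrightarrow> z = 0"
    using max unfolding N_def by blast
  obtain c where c: "c > 0" "\<And>y. (\<forall>v\<in>E. cinner v y = 0) \<Longrightarrow> c * (norm y)^2 \<le> qf f y"
    using bounded_below[OF f0 g0 T E(1,3) max'] by blast
  have fproj: "cinner (f n) (proj E x) = 0" for n x
    using E(2) unfolding proj_def N_def by (auto simp: cinner_sum_right cinner_scaleC_right intro!: sum.neutral)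
  have qf_proj: "qf f x = qf f (x - proj E x)" for x
    unfolding qf_def by (simp add: cinner_diff_right fproj)
  define B where "B = opt_bessel_bound f"
  define S where "S = {B. bessel_bound f B}"
  have Sne: "S \<noteq> {}" using f0 S_def by blast
  have Sbdd: "bdd_below S" unfolding S_def bdd_below_def
    by (rule exI[of _ 0]) (auto dest: bessel_boundE(1))
  have qfB: "qf f x \<le> B * (norm x)^2" for x
  proof (cases "x = 0")
    case True then show ?thesis by simp
  next
    case False
    then have nx: "(norm x)^2 > 0" by simp
    have "qf f x / (norm x)^2 \<le> Inf S"
    proof (rule cInf_greatest[OF Sne])
      fix B' assume "B' \<in> S"
      then have "qf f x \<le> B' * (norm x)^2" unfolding S_def mem_Collect_eq by (rule bessel_boundE(3))
      then show "qf f x / (norm x)^2 \<le> B'" using nx by (simp add: divide_le_eq)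
    qed
    then show ?thesis using nx unfolding B_def opt_bessel_bound_def S_def[symmetric]
      by (simp add: divide_le_eq)
  qed
  have Bpos: "B > 0"
  proof (rule ccontr)
    assume "\<not> B > 0"
    then have Bn: "B \<le> 0" by simp
    have q0: "qf f x \<le> 0" for x
    proof -
      have "B * (norm x)^2 \<le> 0" using Bn by (intro mult_nonpos_nonneg) auto
      then show ?thesis using qfB[of x] by linarith
    qed
    have allN: "x \<in> N" for x
    proof -
      have "cinner (f n) x = 0" for n
      proof -
        have "(cmod (cinner (f n) x))^2 \<le> 0" using term_le_qf[OF f0, of n x] q0[of x] by linarith
        then show ?thesis by simp
      qed
      then show ?thesis unfolding N_def by simp
    qed
    have "x \<in> cspan E" for x
    proof -
      have "x - proj E x = 0"
        using max allN orth_proj_diff[OF E(1,3)] by blast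
      then have "x = (\<Sum>v\<in>E. scaleC (cinner v x) v)" unfolding proj_def by simp
      then show ?thesis unfolding cspan_def using E(1) by (intro CollectI exI[of _ E] exI[of _ "\<lambda>v. cinner v x"]) simp
    qed
    then have "cspan E = UNIV" by auto
    then show False using inf E(1) unfolding infinite_dimensional_def by blast
  qed
  have fB: "bessel_bound f B" unfolding bessel_bound_def
    using Bpos qfB bessel_boundE(2)[OF f0] unfolding qf_def by blast
  obtain es where es: "set es = E" "distinct es" using finite_distinct_list[OF E(1)] by blast
  define xs where "xs = map (scaleC (complex_of_real (sqrt B))) es"
  define h where "h = prepend xs f"
  define p where "p x = (\<Sum>v\<in>E. (cmod (cinner v x))^2)" for x
  have hsums: "(\<lambda>n. (cmod (cinner (h n) x))^2) sums (B * p x + qf f x)" for x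
  proof -
    have "(\<lambda>i. (cmod (cinner (h (i + length xs)) x))^2) sums qf f x"
      unfolding h_def prepend_def qf_def by (simp add: summable_sums bessel_boundE(2)[OF f0])
    then have "(\<lambda>n. (cmod (cinner (h n) x))^2) sums (qf f x + (\<Sum>i<length xs. (cmod (cinner (h i) x))^2))"
      using sums_iff_shift[of "\<lambda>n. (cmod (cinner (h n) x))^2" "length xs" "qf f x"] by blast
    moreover have "(\<Sum>i<length xs. (cmod (cinner (h i) x))^2) = B * p x"
    proof -
      have "(\<Sum>i<length xs. (cmod (cinner (h i) x))^2) = (\<Sum>i<length es. B * (cmod (cinner (es ! i) x))^2)"
        using Bpos by (intro sum.cong) (auto simp: h_def prepend_def xs_def cinner_scaleC_left norm_mult power_mult_distrib)
      also have "\<dots> = (\<Sum>v\<in>E. B * (cmod (cinner v x))^2)"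
        using sum.reindex_bij_betw[OF bij_betw_nth[OF es(2) refl es(1)[symmetric]], of "\<lambda>v. B * (cmod (cinner v x))^2"]
        by simp
      finally show ?thesis by (simp add: p_def sum_distrib_left)
    qed
    ultimately show ?thesis by (simp add: add.commute)
  qed
  have split: "(norm x)^2 = p x + (norm (x - proj E x))^2" for x
    unfolding p_def by (rule norm_split[OF E(1,3)])
  have upper: "B * p x + qf f x \<le> B * (norm x)^2" for x
    using qf_proj[of x] qfB[of "x - proj E x"] split[of x] by (simp add: distrib_left)
  have lower: "min B c * (norm x)^2 \<le> B * p x + qf f x" for x
  proof -
    have "c * (norm (x - proj E x))^2 \<le> qf f x"
      using c(2)[of "x - proj E x"] orth_proj_diff[OF E(1,3)] qf_proj[of x] by simp
    moreover have "min B c * p x \<le> B * p x" using p_def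
      by (intro mult_right_mono) (auto intro: sum_nonneg)
    moreover have "min B c * (norm (x - proj E x))^2 \<le> c * (norm (x - proj E x))^2"
      by (intro mult_right_mono) auto
    ultimately show ?thesis using split[of x] by (simp add: distrib_left)
  qed
  have hB: "bessel_bound h B" unfolding bessel_bound_def
    using Bpos hsums upper by (metis sums_summable sums_unique)
  have frame: "is_frame h" unfolding is_frame_def bessel_seq_def
  proof (intro conjI exI)
    show "bessel_bound h B" by (rule hB)
    show "min B c > 0" using Bpos c(1) by simp
    show "\<forall>x. min B c * (norm x)\<^sup>2 \<le> (\<Sum>n. (cmod (cinner (h n) x))\<^sup>2)"
      using lower hsums sums_unique by metis
  qed
  have opt: "opt_bessel_bound h = B" unfolding opt_bessel_bound_def
  proof (rule cInf_eq_minimum)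
    show "B \<in> {B. bessel_bound h B}" using hB by simp
    fix B' assume "B' \<in> {B. bessel_bound h B}"
    then have hB': "bessel_bound h B'" by simp
    have "bessel_bound f B'" unfolding bessel_bound_def
    proof (intro conjI allI)
      show "B' > 0" using bessel_boundE(1)[OF hB'] .
      fix x
      show "summable (\<lambda>n. (cmod (cinner (f n) x))\<^sup>2)" by (rule bessel_boundE(2)[OF f0])
      have "0 \<le> B * p x" using Bpos unfolding p_def by (intro mult_nonneg_nonneg sum_nonneg) auto
      then have "qf f x \<le> (\<Sum>n. (cmod (cinner (h n) x))\<^sup>2)" using hsums[of x] sums_unique by fastforce
      also have "\<dots> \<le> B' * (norm x)^2" using bessel_boundE(3)[OF hB'] unfolding qf_def by blast
      finally show "(\<Sum>n. (cmod (cinner (f n) x))\<^sup>2) \<le> B' * (norm x)\<^sup>2" unfolding qf_def .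
    qed
    then have "B' \<in> S" unfolding S_def by simp
    then show "B \<le> B'" unfolding B_def opt_bessel_bound_def S_def[symmetric] by (rule cInf_lower[OF _ Sbdd])
  qed
  show ?thesis using frame opt unfolding h_def B_def by blast
qed

theorem theorem2p4:
  fixes f g :: "nat \<Rightarrow> 'a::{complex_inner, complete_space}" and B D :: real
  assumes "infinite_dimensional TYPE('a)"
    and "separable_hilbert TYPE('a)"
    and "bessel_seq f" and "bessel_seq g"
    and "B = opt_bessel_bound f" and "D = opt_bessel_bound g"
    and "compact_operator (\<lambda>x. x - synth_anal g f x)"
  shows "\<exists>xs ys :: 'a list.
           is_frame (prepend xs f) \<and> opt_bessel_bound (prepend xs f) = B \<and>
           is_frame (prepend ys g) \<and> opt_bessel_bound (prepend ys g) = D"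
proof -
  have T: "seqcomp (\<lambda>x. x - synth_anal g f x)" by (rule compact_seqcomp[OF assms(7)])
  obtain B0 where f0: "bessel_bound f B0" using assms(3) unfolding bessel_seq_def by blast
  obtain D0 where g0: "bessel_bound g D0" using assms(4) unfolding bessel_seq_def by blast
  have T': "seqcomp (\<lambda>y. y - synth_anal f g y)" by (rule adj_seqcomp[OF f0 g0 T])
  obtain xs where "is_frame (prepend xs f)" "opt_bessel_bound (prepend xs f) = B"
    using frame_ext[OF assms(1,3,4) T] assms(5) by blast
  moreover obtain ys where "is_frame (prepend ys g)" "opt_bessel_bound (prepend ys g) = D"
    using frame_ext[OF assms(1,4,3) T'] assms(6) by blast
  ultimately show ?thesis by blast
qed


end
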